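(* There exists an absolute constant $C$ such that the following holds. Let $W$ be a non-negative integer-valued random variable with $EW=\lambda\in(0,\infty)$, let $Y\sim\mathrm{Poi}(\lambda)$, and for integers $k\ge0$ let $$\eta_k=\sup\Big\{\frac{P(W\ge r)}{P(Y\ge r)}: r \text{ integer},\ \lambda\le r\le k\Big\}$$ (with the supremum of the empty set equal to $0$). Then for every non-negative, non-decreasing function $g:\{0,1,2,\dots\}\to\mathbb R$ and every integer $k\ge0$, $$E\,g(W\wedge k)\le C(\eta_k+1)\,E\,g(Y\wedge k).$$
   Context: $a\wedge b=\min(a,b)$; $\mathrm{Poi}(\lambda)$ is the Poisson distribution with mean $\lambda$. *)

theory Defs
  imports "HOL-Probability.Probability"
begin

definition tail_eta :: "nat pmf \<Rightarrow> real \<Rightarrow> nat \<Rightarrow> real" where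
  "tail_eta p lam k =
     (let R = {r::nat. lam \<le> real r \<and> r \<le> k} in
      if R = {} then 0
      else Max ((\<lambda>r. measure_pmf.prob p {w. r \<le> w}
                     / measure_pmf.prob (poisson_pmf lam) {y. r \<le> y}) ` R))"

end

theory Submission imports Defs begin

lemma integ_bdd:
  fixes g :: "nat \<Rightarrow> real"
  assumes "\<And>n. 0 \<le> g n" "mono g"
  shows "integrable (measure_pmf p) (\<lambda>w. g (min w k))"
proof (rule measure_pmf.integrable_const_bound[where B="g k"])
  show "AE x in measure_pmf p. norm (g (min x k)) \<le> g k"
    using assms by (auto intro!: monoD[OF assms(2)])
qed simp

lemma telescope:
  fixes g :: "nat \<Rightarrow> real"
  assumes "b \<le> k"
  shows "g (min w k) = g (min w b) + (\<Sum>r\<in>{b<..k}. (g r - g (r - 1)) * indicator {w. r \<le> w} w)"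
  using assms
proof (induction k rule: dec_induct)
  case base then show ?case by simp
next
  case (step k)
  have e0: "{b<..Suc k} = insert (Suc k) {b<..k}" using step by auto
  have e: "(\<Sum>r\<in>{b<..Suc k}. (g r - g (r - 1)) * indicator {w. r \<le> w} w) =
     (g (Suc k) - g k) * indicator {w. Suc k \<le> w} w + (\<Sum>r\<in>{b<..k}. (g r - g (r - 1)) * indicator {w. r \<le> w} w)"
    unfolding e0 by (subst sum.insert) auto
  show ?case
  proof (cases "w \<le> k")
    case True
    then show ?thesis using step e by (simp add: min_def)
  next
    case False
    then have "min w (Suc k) = Suc k" "min w k = k" by auto
    then show ?thesis using step e False by (simp add: indicator_def)
  qed
qed

lemma poisson_q:
  fixes lam :: real
  assumes "0 < lam" "real n \<le> lam"
  shows "j < n \<Longrightarrow> lam ^ (n - Suc j) / fact (n - Suc j) \<le> lam ^ (n + j) / fact (n + j)"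
proof (induction j)
  case 0
  then obtain m where n: "n = Suc m" by (cases n) auto
  have "lam ^ m / fact m = lam ^ (Suc m) / fact (Suc m) * (real (Suc m) / lam)"
    using assms by (simp add: fact_Suc field_simps del: of_nat_Suc)
  also have "\<dots> \<le> lam ^ (Suc m) / fact (Suc m) * 1"
    using assms n by (intro mult_left_mono) (auto simp: field_simps)
  finally show ?case using n by simp
next
  case (Suc j)
  define i where "i = n - Suc (Suc j)"
  have i1: "n - Suc j = Suc i" using Suc.prems unfolding i_def by simp
  have IH: "lam ^ Suc i / fact (Suc i) \<le> lam ^ (n + j) / fact (n + j)"
    using Suc i1 by simp
  have prod: "real (Suc i) * real (n + j + 1) \<le> lam * lam"
  proof -
    have hn: "n = i + j + 2" using Suc.prems i1 unfolding i_def by simp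
    have "real (Suc i) * real (n + j + 1) = (real n - real (Suc j)) * (real n + real (Suc j))"
      unfolding hn by (simp add: algebra_simps)
    also have "\<dots> \<le> real n * real n" by (simp add: algebra_simps)
    also have "\<dots> \<le> lam * lam" using assms by (intro mult_mono) auto
    finally show ?thesis .
  qed
  have "lam ^ i / fact i = lam ^ Suc i / fact (Suc i) * (real (Suc i) / lam)"
    using assms by (simp add: fact_Suc field_simps del: of_nat_Suc)
  also have "\<dots> \<le> lam ^ (n + j) / fact (n + j) * (real (Suc i) / lam)"
    using IH assms by (intro mult_right_mono) auto
  also have "\<dots> \<le> lam ^ (n + j) / fact (n + j) * (lam / real (n + j + 1))"
    using prod assms by (intro mult_left_mono) (auto simp: field_simps)
  also have "\<dots> = lam ^ (n + Suc j) / fact (n + Suc j)"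
    using assms by (simp add: fact_Suc field_simps del: of_nat_Suc)
  finally show ?case unfolding i_def by simp
qed

lemma poisson_half:
  fixes lam :: real
  assumes "0 < lam" "real n \<le> lam"
  shows "measure_pmf.prob (poisson_pmf lam) {y. n \<le> y} \<ge> 1/2"
proof -
  let ?Y = "poisson_pmf lam"
  have low: "measure_pmf.prob ?Y {..<n} = (\<Sum>j<n. pmf ?Y (n - Suc j))"
    by (simp add: measure_measure_pmf_finite sum.nat_diff_reindex)
  also have "\<dots> \<le> (\<Sum>j<n. pmf ?Y (n + j))"
  proof (intro sum_mono)
    fix j assume "j \<in> {..<n}"
    then have "lam ^ (n - Suc j) / fact (n - Suc j) * exp (-lam) \<le> lam ^ (n + j) / fact (n + j) * exp (-lam)"
      using poisson_q[OF assms] by (intro mult_right_mono) auto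
    then show "pmf ?Y (n - Suc j) \<le> pmf ?Y (n + j)" using assms by simp
  qed
  also have "\<dots> = measure_pmf.prob ?Y ((\<lambda>j. n + j) ` {..<n})"
    by (simp add: measure_measure_pmf_finite sum.reindex)
  also have "\<dots> \<le> measure_pmf.prob ?Y {y. n \<le> y}"
    by (intro measure_pmf.finite_measure_mono) auto
  finally have "measure_pmf.prob ?Y {..<n} \<le> measure_pmf.prob ?Y {y. n \<le> y}" .
  moreover have "measure_pmf.prob ?Y {..<n} + measure_pmf.prob ?Y {y. n \<le> y} = 1"
  proof -
    have "{y. n \<le> y} = UNIV - {..<n}" by auto
    then show ?thesis using measure_pmf.prob_compl[of "{..<n}" ?Y] by simp
  qed
  ultimately show ?thesis by linarith
qed

lemma expect_split:
  fixes g :: "nat \<Rightarrow> real"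
  assumes "\<And>n. 0 \<le> g n" "mono g" "b \<le> k"
  shows "measure_pmf.expectation q (\<lambda>w. g (min w k)) =
     measure_pmf.expectation q (\<lambda>w. g (min w b)) +
     (\<Sum>r\<in>{b<..k}. (g r - g (r - 1)) * measure_pmf.prob q {w. r \<le> w})"
proof -
  have ind: "integrable (measure_pmf q) (\<lambda>w. (g r - g (r - 1)) * indicator {w. r \<le> w} w)" for r
    by (intro integrable_mult_right) (rule measure_pmf.integrable_const_bound[where B=1], auto simp: indicator_def)
  have "measure_pmf.expectation q (\<lambda>w. g (min w k)) =
     measure_pmf.expectation q (\<lambda>w. g (min w b) + (\<Sum>r\<in>{b<..k}. (g r - g (r - 1)) * indicator {w. r \<le> w} w))"
    using telescope[OF assms(3), of g] by simp
  also have "\<dots> = measure_pmf.expectation q (\<lambda>w. g (min w b)) +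
      measure_pmf.expectation q (\<lambda>w. \<Sum>r\<in>{b<..k}. (g r - g (r - 1)) * indicator {w. r \<le> w} w)"
  proof (rule Bochner_Integration.integral_add)
    show "integrable (measure_pmf q) (\<lambda>w. g (min w b))" by (rule integ_bdd[OF assms(1,2)])
    show "integrable (measure_pmf q) (\<lambda>w. \<Sum>r\<in>{b<..k}. (g r - g (r - 1)) * indicator {w. r \<le> w} w)"
      by (rule Bochner_Integration.integrable_sum) (rule ind)
  qed
  also have "measure_pmf.expectation q (\<lambda>w. \<Sum>r\<in>{b<..k}. (g r - g (r - 1)) * indicator {w. r \<le> w} w)
     = (\<Sum>r\<in>{b<..k}. measure_pmf.expectation q (\<lambda>w. (g r - g (r - 1)) * indicator {w. r \<le> w} w))"
    by (rule Bochner_Integration.integral_sum) (rule ind)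
  also have "\<dots> = (\<Sum>r\<in>{b<..k}. (g r - g (r - 1)) * measure_pmf.prob q {w. r \<le> w})"
    by simp
  finally show ?thesis .
qed


theorem lemma4p4:
  shows "\<exists>C::real. \<forall>(p::nat pmf) (lam::real) (g::nat \<Rightarrow> real) (k::nat).
     0 < lam \<and> integrable (measure_pmf p) real
     \<and> measure_pmf.expectation p real = lam
     \<and> (\<forall>n. 0 \<le> g n) \<and> mono g
     \<longrightarrow> measure_pmf.expectation p (\<lambda>w. g (min w k))
         \<le> C * (tail_eta p lam k + 1)
             * measure_pmf.expectation (poisson_pmf lam) (\<lambda>y. g (min y k))"
proof (intro exI[of _ 2] allI impI)
  fix p :: "nat pmf" and lam :: real and g :: "nat \<Rightarrow> real" and k :: nat
  assume H: "0 < lam \<and> integrable (measure_pmf p) real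
     \<and> measure_pmf.expectation p real = lam \<and> (\<forall>n. 0 \<le> g n) \<and> mono g"
  then have lam: "0 < lam" and g0: "\<And>n. 0 \<le> g n" and gm: "mono g" by auto
  let ?Y = "poisson_pmf lam"
  define a where "a = nat \<lceil>lam\<rceil>"
  define b where "b = min k (a - 1)"
  have la: "lam \<le> real a" unfolding a_def by linarith
  have a1: "a \<ge> 1" unfolding a_def using lam by linarith
  have alt: "real (a - 1) < lam" unfolding a_def using lam by linarith
  have bk: "b \<le> k" unfolding b_def by simp
  have bl: "real b \<le> lam" unfolding b_def using alt by linarith
  define R where "R = {r::nat. lam \<le> real r \<and> r \<le> k}"
  define eta where "eta = tail_eta p lam k"
  have finR: "finite R" unfolding R_def by (rule finite_subset[of _ "{..k}"]) auto
  have ratio_nn: "0 \<le> measure_pmf.prob p {w. r \<le> w} / measure_pmf.prob ?Y {w. r \<le> w}" for r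
    by simp
  have eta_nn: "0 \<le> eta"
  proof (cases "R = {}")
    case True then show ?thesis unfolding eta_def tail_eta_def R_def[symmetric] by (simp add: Let_def)
  next
    case False
    then obtain r where r: "r \<in> R" by auto
    have "0 \<le> measure_pmf.prob p {w. r \<le> w} / measure_pmf.prob ?Y {w. r \<le> w}" by simp
    also have "\<dots> \<le> eta"
      unfolding eta_def tail_eta_def R_def[symmetric] using False r finR by (simp add: Let_def)
    finally show ?thesis .
  qed
  have Ypos: "0 < measure_pmf.prob ?Y {w. r \<le> w}" for r
  proof -
    have "0 < pmf ?Y r" using lam by simp
    also have "pmf ?Y r \<le> measure_pmf.prob ?Y {w. r \<le> w}"
      by (simp add: pmf.rep_eq measure_pmf.finite_measure_mono)
    finally show ?thesis .
  qed
  have tailbd: "measure_pmf.prob p {w. r \<le> w} \<le> eta * measure_pmf.prob ?Y {w. r \<le> w}"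
    if r: "r \<in> {b<..k}" for r
  proof -
    have "r \<in> R"
    proof -
      have "b \<noteq> k" using r by auto
      then have "b = a - 1" unfolding b_def by auto
      then have "a \<le> r" using r a1 by auto
      then show ?thesis using la r unfolding R_def by auto
    qed
    then have "R \<noteq> {}" by auto
    then have "measure_pmf.prob p {w. r \<le> w} / measure_pmf.prob ?Y {w. r \<le> w} \<le> eta"
      unfolding eta_def tail_eta_def R_def[symmetric] using \<open>r \<in> R\<close> finR by (simp add: Let_def)
    then show ?thesis using Ypos[of r] by (simp add: divide_le_eq)
  qed
  define S where "S = (\<Sum>r\<in>{b<..k}. (g r - g (r - 1)) * measure_pmf.prob ?Y {w. r \<le> w})"
  define E where "E = measure_pmf.expectation ?Y (\<lambda>y. g (min y k))"
  have dg: "0 \<le> g r - g (r - 1)" for r using monoD[OF gm, of "r - 1" r] by simp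
  have S_nn: "0 \<le> S" unfolding S_def using dg by (intro sum_nonneg) simp
  have EY: "E = measure_pmf.expectation ?Y (\<lambda>w. g (min w b)) + S"
    unfolding E_def S_def by (rule expect_split[OF g0 gm bk])
  have SE: "S \<le> E" using EY g0 by (simp add: Bochner_Integration.integral_nonneg)
  have EW: "measure_pmf.expectation p (\<lambda>w. g (min w k)) = measure_pmf.expectation p (\<lambda>w. g (min w b))
       + (\<Sum>r\<in>{b<..k}. (g r - g (r - 1)) * measure_pmf.prob p {w. r \<le> w})"
    by (rule expect_split[OF g0 gm bk])
  have W1: "measure_pmf.expectation p (\<lambda>w. g (min w b)) \<le> g b"
  proof -
    have "measure_pmf.expectation p (\<lambda>w. g (min w b)) \<le> measure_pmf.expectation p (\<lambda>w. g b)"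
      by (intro Bochner_Integration.integral_mono integ_bdd g0 gm) (auto intro: monoD[OF gm])
    then show ?thesis by simp
  qed
  have W2: "(\<Sum>r\<in>{b<..k}. (g r - g (r - 1)) * measure_pmf.prob p {w. r \<le> w}) \<le> eta * S"
    unfolding S_def sum_distrib_left
  proof (rule sum_mono)
    fix r assume r: "r \<in> {b<..k}"
    have "(g r - g (r - 1)) * measure_pmf.prob p {w. r \<le> w} \<le> (g r - g (r - 1)) * (eta * measure_pmf.prob ?Y {w. r \<le> w})"
      by (intro mult_left_mono tailbd r dg)
    then show "(g r - g (r - 1)) * measure_pmf.prob p {w. r \<le> w} \<le> eta * ((g r - g (r - 1)) * measure_pmf.prob ?Y {w. r \<le> w})"
      by (simp add: algebra_simps)
  qed
  have gb: "g b \<le> 2 * E"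
  proof -
    have "measure_pmf.expectation ?Y (\<lambda>y. g b * indicator {y. b \<le> y} y) \<le> E"
      unfolding E_def
    proof (intro Bochner_Integration.integral_mono integ_bdd g0 gm)
      show "integrable (measure_pmf ?Y) (\<lambda>y. g b * indicator {y. b \<le> y} y)"
        by (intro integrable_mult_right) (rule measure_pmf.integrable_const_bound[where B=1], auto simp: indicator_def)
      fix y show "g b * indicator {y. b \<le> y} y \<le> g (min y k)"
        using bk g0 by (auto simp: indicator_def intro: monoD[OF gm])
    qed
    moreover have "measure_pmf.expectation ?Y (\<lambda>y. g b * indicator {y. b \<le> y} y) = g b * measure_pmf.prob ?Y {y. b \<le> y}"
      by simp
    moreover have "g b * (1/2) \<le> g b * measure_pmf.prob ?Y {y. b \<le> y}"
      using poisson_half[OF lam bl] g0 by (intro mult_left_mono) auto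
    ultimately show ?thesis by linarith
  qed
  have "measure_pmf.expectation p (\<lambda>w. g (min w k)) \<le> 2 * E + eta * E"
    using EW W1 W2 gb mult_left_mono[OF SE eta_nn] by linarith
  also have "\<dots> \<le> 2 * (eta + 1) * E"
    using eta_nn SE S_nn by (simp add: algebra_simps)
  finally show "measure_pmf.expectation p (\<lambda>w. g (min w k)) \<le> 2 * (tail_eta p lam k + 1) * measure_pmf.expectation ?Y (\<lambda>y. g (min y k))"
    unfolding eta_def E_def .
qed

end
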